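(* Let $H$ be a graph and $W\subseteq V(H)$ nonempty. Then $\gamma(H)\ge \varepsilon(H,W)\cdot|W|^2/108$.
   Context: For $u,v\in V(H)$, $\mathcal P_H(u,v)$ is the set of paths from $u$ to $v$ in $H$; for $u=v$ it contains only the one-vertex path $(u)$. The concurrent flow LP for $H$ and $W$ with vertex capacity $C>0$: maximize $\varepsilon$ subject to $\sum_{p\in\mathcal P_H(u,v)}x_p\ge\varepsilon$ for all $u,v\in W$; $\sum_{u,v\in W}\sum_{p\in\mathcal P_H(u,v):\,w\in p}x_p\le C$ for all $w\in V(H)$; $x_p\ge0$. $\varepsilon(H,W)$ is the optimal value for $C=1$. Blowup: $H\otimes J_t$ has vertices $v^{(i)}$ ($v\in V(H)$, $i\in[t]$) and edges $u^{(i)}v^{(j)}$ for $uv\in E(H)$, all $i,j\in[t]$, and $u^{(i)}u^{(j)}$ for $u\in V(H)$, $i\neq j$. A matching on $X$ is a set of pairwise disjoint unordered pairs of distinct vertices of $X$ (not necessarily edges); $X$ is matching-linked in a graph if for every matching $M$ on $X$ there are pairwise vertex-disjoint paths connecting the two vertices of each pair of $M$. Linkage capacity $\gamma(H)$: the supremum of all $c>0$ such that for all sufficiently large $t$ the blowup $H\otimes J_t$ contains a matching-linked set of size $\lfloor ct\rfloor$. *)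

theory Defs
  imports Complex_Main
begin

definition simple_graph :: "'v set \<Rightarrow> ('v \<Rightarrow> 'v \<Rightarrow> bool) \<Rightarrow> bool" where
  "simple_graph V E \<longleftrightarrow> finite V \<and> (\<forall>u v. E u v \<longrightarrow> u \<in> V \<and> v \<in> V \<and> u \<noteq> v)
     \<and> (\<forall>u v. E u v \<longrightarrow> E v u)"

definition paths :: "'v set \<Rightarrow> ('v \<Rightarrow> 'v \<Rightarrow> bool) \<Rightarrow> 'v \<Rightarrow> 'v \<Rightarrow> 'v list set" where
  "paths V E u v = {p. p \<noteq> [] \<and> hd p = u \<and> last p = v \<and> distinct p \<and> set p \<subseteq> V
                      \<and> successively E p}"

text \<open>Feasibility for the concurrent flow LP with vertex capacity C, value e.\<close>
definition cf_feasible :: "'v set \<Rightarrow> ('v \<Rightarrow> 'v \<Rightarrow> bool) \<Rightarrow> 'v set \<Rightarrow> real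
      \<Rightarrow> ('v list \<Rightarrow> real) \<Rightarrow> real \<Rightarrow> bool" where
  "cf_feasible V E W C x e \<longleftrightarrow>
     (\<forall>u\<in>W. \<forall>v\<in>W. (\<Sum>p\<in>paths V E u v. x p) \<ge> e)
   \<and> (\<forall>w\<in>V. (\<Sum>(u,v)\<in>W \<times> W. \<Sum>p\<in>{p \<in> paths V E u v. w \<in> set p}. x p) \<le> C)
   \<and> (\<forall>p. x p \<ge> 0)"

definition eps_cf :: "'v set \<Rightarrow> ('v \<Rightarrow> 'v \<Rightarrow> bool) \<Rightarrow> 'v set \<Rightarrow> real" where
  "eps_cf V E W = Sup {e. \<exists>x. cf_feasible V E W 1 x e}"

definition blowup_V :: "'v set \<Rightarrow> nat \<Rightarrow> ('v \<times> nat) set" where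
  "blowup_V V t = V \<times> {..<t}"

definition blowup_E :: "('v \<Rightarrow> 'v \<Rightarrow> bool) \<Rightarrow> ('v \<times> nat) \<Rightarrow> ('v \<times> nat) \<Rightarrow> bool" where
  "blowup_E E a b \<longleftrightarrow> E (fst a) (fst b) \<or> (fst a = fst b \<and> snd a \<noteq> snd b)"

definition is_matching_on :: "'a set \<Rightarrow> 'a set set \<Rightarrow> bool" where
  "is_matching_on X M \<longleftrightarrow> (\<forall>e\<in>M. e \<subseteq> X \<and> card e = 2)
     \<and> (\<forall>e\<in>M. \<forall>e'\<in>M. e \<noteq> e' \<longrightarrow> e \<inter> e' = {})"

definition matching_linked :: "'a set \<Rightarrow> ('a \<Rightarrow> 'a \<Rightarrow> bool) \<Rightarrow> 'a set \<Rightarrow> bool" where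
  "matching_linked V E X \<longleftrightarrow> X \<subseteq> V \<and>
     (\<forall>M. is_matching_on X M \<longrightarrow>
        (\<exists>P. (\<forall>e\<in>M. \<exists>u v. e = {u, v} \<and> P e \<in> paths V E u v)
           \<and> (\<forall>e\<in>M. \<forall>e'\<in>M. e \<noteq> e' \<longrightarrow> set (P e) \<inter> set (P e') = {})))"

definition linkage_capacity :: "'v set \<Rightarrow> ('v \<Rightarrow> 'v \<Rightarrow> bool) \<Rightarrow> real" where
  "linkage_capacity V E = Sup {c. c > 0 \<and> (\<exists>T. \<forall>t\<ge>T. \<exists>X.
       matching_linked (blowup_V V t) (blowup_E E) X \<and> card X = nat \<lfloor>c * real t\<rfloor>)}"

end

theory Submission
  imports Defs
begin


lemma alloc:
  fixes n :: "'p \<Rightarrow> nat"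
  assumes "finite P" "L \<le> (\<Sum>p\<in>P. n p)"
  shows "\<exists>\<pi>. (\<forall>l<L. \<pi> l \<in> P) \<and> (\<forall>p. card {l. l<L \<and> \<pi> l = p} \<le> n p)"
  using assms(2)
proof (induction L arbitrary: n)
  case 0
  then show ?case by auto
next
  case (Suc L)
  have "\<exists>p\<in>P. n p > 0"
  proof (rule ccontr)
    assume "\<not> ?thesis"
    then have "(\<Sum>p\<in>P. n p) = 0" by auto
    with Suc.prems show False by simp
  qed
  then obtain p where p: "p \<in> P" "n p > 0" by blast
  define n' where "n' = n(p := n p - 1)"
  have s1: "(\<Sum>q\<in>P. n q) = n p + (\<Sum>q\<in>P-{p}. n q)" using p assms(1) by (simp add: sum.remove)
  have s2: "(\<Sum>q\<in>P. n' q) = n' p + (\<Sum>q\<in>P-{p}. n' q)" using p assms(1) by (simp add: sum.remove)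
  have s3: "(\<Sum>q\<in>P-{p}. n' q) = (\<Sum>q\<in>P-{p}. n q)" unfolding n'_def by (rule sum.cong) auto
  have "L \<le> (\<Sum>q\<in>P. n' q)" using Suc.prems s1 s2 s3 p unfolding n'_def by simp
  from Suc.IH[OF this] obtain \<pi>' where pi': "\<forall>l<L. \<pi>' l \<in> P" "\<forall>q. card {l. l<L \<and> \<pi>' l = q} \<le> n' q" by blast
  define \<pi> where "\<pi> = \<pi>'(L := p)"
  have "\<forall>l<Suc L. \<pi> l \<in> P" using pi' p unfolding \<pi>_def by (auto simp: less_Suc_eq)
  moreover have "card {l. l<Suc L \<and> \<pi> l = q} \<le> n q" for q
  proof (cases "q = p")
    case True
    have "{l. l<Suc L \<and> \<pi> l = q} = insert L {l. l<L \<and> \<pi>' l = q}"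
      using True unfolding \<pi>_def by (auto simp: less_Suc_eq)
    then have "card {l. l<Suc L \<and> \<pi> l = q} \<le> Suc (card {l. l<L \<and> \<pi>' l = q})"
      by (simp add: card_insert_le_m1)
    also have "\<dots> \<le> Suc (n' q)" using pi' by simp
    finally show ?thesis using True p unfolding n'_def by simp
  next
    case False
    have "{l. l<Suc L \<and> \<pi> l = q} = {l. l<L \<and> \<pi>' l = q}"
      using False unfolding \<pi>_def by (auto simp: less_Suc_eq)
    then show ?thesis using pi'(2)[rule_format, of q] False by (simp add: n'_def)
  qed
  ultimately show ?case by blast
qed



lemma hub_exists:
  fixes M :: "'a set set" and f :: "'a \<Rightarrow> 'v" and W :: "'v set"
  assumes "finite M" "\<forall>e\<in>M. card e = 2" "\<forall>e\<in>M. \<forall>e'\<in>M. e \<noteq> e' \<longrightarrow> e \<inter> e' = {}"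
    "finite W" "\<forall>u. card {a \<in> \<Union>M. f a = u} \<le> s" "2*s + card W \<le> card W * L"
  shows "\<exists>h. (\<forall>e\<in>M. \<forall>a\<in>e. \<forall>b\<in>e. h a = h b) \<and> (\<forall>a\<in>\<Union>M. h a \<in> W)
            \<and> (\<forall>u z. card {a\<in>\<Union>M. f a = u \<and> h a = z} \<le> L)"
  using assms(1,2,3,5)
proof (induction M rule: finite_induct)
  case empty
  then show ?case by auto
next
  case (insert e M)
  have cM: "\<forall>e\<in>M. card e = 2" "\<forall>e\<in>M. \<forall>e'\<in>M. e \<noteq> e' \<longrightarrow> e \<inter> e' = {}"
    using insert.prems by auto
  have finU: "finite (\<Union>(insert e M))" using insert.prems(1) insert.hyps(1)
    by (metis card.infinite finite_Union finite_insert zero_neq_numeral)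
  have sub: "{a \<in> \<Union>M. f a = u} \<subseteq> {a \<in> \<Union>(insert e M). f a = u}" for u by auto
  have cM3: "\<forall>u. card {a \<in> \<Union>M. f a = u} \<le> s"
  proof
    fix u have f1: "finite {a \<in> \<Union>(insert e M). f a = u}" by (rule finite_subset[OF _ finU]) auto
    show "card {a \<in> \<Union>M. f a = u} \<le> s"
      using card_mono[OF f1 sub[of u]] insert.prems(3) by (meson le_trans)
  qed
  from insert.IH[OF cM cM3] obtain h where h: "\<forall>e\<in>M. \<forall>a\<in>e. \<forall>b\<in>e. h a = h b" "\<forall>a\<in>\<Union>M. h a \<in> W"
    "\<forall>u z. card {a\<in>\<Union>M. f a = u \<and> h a = z} \<le> L" by blast
  have "card e = 2" using insert.prems(1) by simp
  then obtain a b where ab: "e = {a,b}" "a \<noteq> b" unfolding card_2_iff by blast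
  have disj: "e \<inter> \<Union>M = {}"
  proof -
    have "e \<inter> e' = {}" if "e' \<in> M" for e'
    proof -
      have "e \<noteq> e'" using insert.hyps(2) that by auto
      then show ?thesis using insert.prems(2) that by simp
    qed
    then show ?thesis by auto
  qed
  define old where "old u z = card {y\<in>\<Union>M. f y = u \<and> h y = z}" for u z
  have sumle: "(\<Sum>z\<in>W. old (f c) z) + 1 \<le> s" if "c \<in> e" for c
  proof -
    have fin: "finite (\<Union>M)" using finU by auto
    have "(\<Sum>z\<in>W. old (f c) z) = card (\<Union>z\<in>W. {y\<in>\<Union>M. f y = f c \<and> h y = z})"
      unfolding old_def using fin assms(4) by (subst card_UN_disjoint) (auto intro: rev_finite_subset[OF fin])
    also have "\<dots> \<le> card {y \<in> \<Union>M. f y = f c}"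
      by (rule card_mono) (auto intro: rev_finite_subset[OF fin])
    finally have 1: "(\<Sum>z\<in>W. old (f c) z) \<le> card {y \<in> \<Union>M. f y = f c}" .
    have "insert c {y \<in> \<Union>M. f y = f c} \<subseteq> {y \<in> \<Union>(insert e M). f y = f c}" using that by auto
    moreover have "finite {y \<in> \<Union>(insert e M). f y = f c}" by (rule finite_subset[OF _ finU]) auto
    ultimately have "card (insert c {y \<in> \<Union>M. f y = f c}) \<le> s"
      using card_mono insert.prems(3) by (meson le_trans)
    moreover have "c \<notin> {y \<in> \<Union>M. f y = f c}" using disj that by auto
    moreover have "finite {y \<in> \<Union>M. f y = f c}" by (rule rev_finite_subset[OF fin]) auto
    ultimately have "card {y \<in> \<Union>M. f y = f c} + 1 \<le> s" by (metis card_insert_disjoint Suc_eq_plus1)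
    with 1 show ?thesis by simp
  qed
  have "\<exists>z\<in>W. old (f a) z + old (f b) z + 2 \<le> L"
  proof (rule ccontr)
    assume "\<not> ?thesis"
    then have "\<forall>z\<in>W. L \<le> old (f a) z + old (f b) z + 1" by auto
    then have "(\<Sum>z\<in>W. L) \<le> (\<Sum>z\<in>W. old (f a) z + old (f b) z + 1)" by (intro sum_mono) blast
    also have "\<dots> = (\<Sum>z\<in>W. old (f a) z) + (\<Sum>z\<in>W. old (f b) z) + card W" by (simp only: sum.distrib) simp
    finally have "card W * L \<le> (\<Sum>z\<in>W. old (f a) z) + (\<Sum>z\<in>W. old (f b) z) + card W" by simp
    moreover have "(\<Sum>z\<in>W. old (f a) z) + 1 \<le> s" "(\<Sum>z\<in>W. old (f b) z) + 1 \<le> s"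
      using sumle ab by auto
    ultimately show False using assms(6) by linarith
  qed
  then obtain z where z: "z \<in> W" "old (f a) z + old (f b) z + 2 \<le> L" by blast
  define h' where "h' y = (if y \<in> e then z else h y)" for y
  have "\<forall>e'\<in>insert e M. \<forall>a\<in>e'. \<forall>b\<in>e'. h' a = h' b"
  proof (intro ballI)
    fix e' c d assume "e' \<in> insert e M" "c \<in> e'" "d \<in> e'"
    then show "h' c = h' d"
    proof (cases "e' = e")
      case False
      then have "e' \<in> M" using \<open>e' \<in> insert e M\<close> by auto
      then have cd: "c \<notin> e" "d \<notin> e" using disj \<open>c \<in> e'\<close> \<open>d \<in> e'\<close> by blast+
      have "h c = h d" using h(1) \<open>e' \<in> M\<close> \<open>c \<in> e'\<close> \<open>d \<in> e'\<close> by blast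
      with cd show ?thesis unfolding h'_def by simp
    qed (auto simp: h'_def)
  qed
  moreover have "\<forall>y\<in>\<Union>(insert e M). h' y \<in> W" using h(2) z(1) unfolding h'_def by auto
  moreover have "card {y\<in>\<Union>(insert e M). f y = u \<and> h' y = z'} \<le> L" for u z'
  proof -
    have fin: "finite (\<Union>M)" using finU by auto
    have inc: "{y\<in>\<Union>(insert e M). f y = u \<and> h' y = z'} \<subseteq> {y\<in>\<Union>M. f y = u \<and> h y = z'} \<union> {y\<in>e. f y = u \<and> z = z'}"
      using disj unfolding h'_def by auto
    have "card {y\<in>\<Union>(insert e M). f y = u \<and> h' y = z'} \<le> card ({y\<in>\<Union>M. f y = u \<and> h y = z'} \<union> {y\<in>e. f y = u \<and> z = z'})"
      by (rule card_mono[OF _ inc]) (use ab in \<open>auto intro: rev_finite_subset[OF fin]\<close>)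
    also have "\<dots> \<le> old u z' + card {y\<in>e. f y = u \<and> z = z'}"
      unfolding old_def by (rule card_Un_le)
    finally have 1: "card {y\<in>\<Union>(insert e M). f y = u \<and> h' y = z'} \<le> old u z' + card {y\<in>e. f y = u \<and> z = z'}" .
    show ?thesis
    proof (cases "z' = z \<and> (u = f a \<or> u = f b)")
      case True
      have "card {y\<in>e. f y = u \<and> z = z'} \<le> card e" by (rule card_mono) (use ab in auto)
      then have "card {y\<in>e. f y = u \<and> z = z'} \<le> 2" using ab by simp
      moreover have "old u z' \<le> old (f a) z + old (f b) z" using True by auto
      ultimately show ?thesis using 1 z(2) by linarith
    next
      case False
      then have "{y\<in>e. f y = u \<and> z = z'} = {}" using ab by auto
      then have "card {y\<in>e. f y = u \<and> z = z'} = 0" by (simp only: card.empty)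
      moreover have "old u z' \<le> L" unfolding old_def using h(3) by blast
      ultimately show ?thesis using 1 by linarith
    qed
  qed
  ultimately show ?case by blast
qed



lemma succ_lift:
  assumes "successively E (map fst zs)"
  shows "successively (blowup_E E) zs"
proof -
  have "successively (\<lambda>x y. E (fst x) (fst y)) zs" using assms by (simp add: successively_map)
  then show ?thesis by (rule successively_mono) (auto simp: blowup_E_def)
qed

lemma route:
  fixes V W :: "'v set" and E and X :: "('v\<times>nat) set" and M
  and h :: "'v\<times>nat \<Rightarrow> 'v" and l :: "'v\<times>nat \<Rightarrow> nat" and \<pi> :: "'v \<Rightarrow> 'v \<Rightarrow> nat \<Rightarrow> 'v list"
  and F :: "'v \<times> 'v \<times> nat \<Rightarrow> 'v \<Rightarrow> nat"
  assumes sg: "simple_graph V E" and WV: "W \<subseteq> V" and st: "s \<le> t" and XW: "X \<subseteq> W \<times> {..<s}"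
   and mat: "is_matching_on X M"
   and hcons: "\<forall>e\<in>M. \<forall>a\<in>e. \<forall>b\<in>e. h a = h b"
   and hW: "\<forall>a\<in>\<Union>M. h a \<in> W"
   and lL: "\<forall>a\<in>\<Union>M. l a < L"
   and linj: "\<forall>a\<in>\<Union>M. \<forall>b\<in>\<Union>M. fst a = fst b \<and> h a = h b \<and> l a = l b \<longrightarrow> a = b"
   and pip: "\<forall>u\<in>W. \<forall>z\<in>W. \<forall>j<L. \<pi> u z j \<in> paths V E u z"
   and Fr: "\<forall>u\<in>W. \<forall>z\<in>W. \<forall>j<L. \<forall>w\<in>set(\<pi> u z j). s \<le> F (u,z,j) w \<and> F (u,z,j) w < t"
   and Finj: "\<forall>u\<in>W. \<forall>z\<in>W. \<forall>j<L. \<forall>u'\<in>W. \<forall>z'\<in>W. \<forall>j'<L. \<forall>w.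
         w\<in>set(\<pi> u z j) \<and> w \<in> set(\<pi> u' z' j') \<and> F (u,z,j) w = F (u',z',j') w \<longrightarrow> (u,z,j) = (u',z',j')"
  shows "\<exists>P. (\<forall>e\<in>M. \<exists>u v. e = {u,v} \<and> P e \<in> paths (blowup_V V t) (blowup_E E) u v)
           \<and> (\<forall>e\<in>M. \<forall>e'\<in>M. e \<noteq> e' \<longrightarrow> set (P e) \<inter> set (P e') = {})"
proof -
  define pa where "pa a = \<pi> (fst a) (h a) (l a)" for a
  define seg where "seg a = map (\<lambda>w. (w, F (fst a, h a, l a) w)) (tl (pa a))" for a
  define A where "A a = a # seg a" for a
  have UX: "\<Union>M \<subseteq> X" using mat unfolding is_matching_on_def by auto
  have aW: "fst a \<in> W" "snd a < s" if "a \<in> \<Union>M" for a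
  proof - have "a \<in> W \<times> {..<s}" using that UX XW by blast then show "fst a \<in> W" "snd a < s" by auto qed
  have pap: "pa a \<in> paths V E (fst a) (h a)" if "a \<in> \<Union>M" for a
    using pip aW[OF that] hW lL that unfolding pa_def by blast
  have pa1: "pa a \<noteq> []" "hd (pa a) = fst a" "last (pa a) = h a" "distinct (pa a)" "set (pa a) \<subseteq> V"
     "successively E (pa a)" if "a \<in> \<Union>M" for a
    using pap[OF that] unfolding paths_def by auto
  have mapA: "map fst (A a) = pa a" if "a \<in> \<Union>M" for a
  proof -
    have "map fst (A a) = fst a # tl (pa a)" unfolding A_def seg_def by (simp add: comp_def)
    also have "\<dots> = pa a" using pa1(1,2)[OF that] by (metis hd_Cons_tl)
    finally show ?thesis .
  qed
  have Fa: "s \<le> F (fst a, h a, l a) w \<and> F (fst a, h a, l a) w < t" if "a \<in> \<Union>M" "w \<in> set (pa a)" for a w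
    using Fr aW[OF that(1)] hW lL that unfolding pa_def by blast
  have tlsub: "set (tl xs) \<subseteq> set xs" for xs :: "'v list" by (cases xs) auto
  have segset: "y \<in> set (seg a) \<Longrightarrow> \<exists>w. w \<in> set (pa a) \<and> y = (w, F (fst a, h a, l a) w)" for a y
    unfolding seg_def using tlsub by auto
  have F1: "set (A a) \<subseteq> V \<times> {..<t}" if "a \<in> \<Union>M" for a
  proof
    fix y assume "y \<in> set (A a)"
    then consider "y = a" | "y \<in> set (seg a)" unfolding A_def by auto
    then show "y \<in> V \<times> {..<t}"
    proof cases
      case 1 then show ?thesis using aW[OF that] WV st by (cases y) auto
    next
      case 2
      then obtain w where "w \<in> set (pa a)" "y = (w, F (fst a, h a, l a) w)" using segset by blast
      then show ?thesis using pa1[OF that] Fa[OF that] by auto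
    qed
  qed
  have F2: "distinct (A a)" if "a \<in> \<Union>M" for a
    using mapA[OF that] pa1[OF that] by (metis distinct_map)
  have F3: "successively (blowup_E E) (A a)" if "a \<in> \<Union>M" for a
    using mapA[OF that] pa1[OF that] succ_lift by metis
  have F4: "fst (last (A a)) = h a" if "a \<in> \<Union>M" for a
  proof -
    have "A a \<noteq> []" unfolding A_def by simp
    then have "fst (last (A a)) = last (map fst (A a))" by (simp add: last_map)
    then show ?thesis using mapA[OF that] pa1[OF that] by simp
  qed
  have F6: "set (A a) \<inter> set (A b) = {}" if "a \<in> \<Union>M" "b \<in> \<Union>M" "a \<noteq> b" for a b
  proof (rule ccontr)
    assume "set (A a) \<inter> set (A b) \<noteq> {}"
    then obtain y where y: "y \<in> set (A a)" "y \<in> set (A b)" by blast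
    have sa: "s \<le> snd y'" if sc: "c \<in> \<Union>M" "y' \<in> set (seg c)" for c y'
    proof -
      obtain w where "w\<in>set(pa c)" "y' = (w, F (fst c, h c, l c) w)" using segset sc(2) by blast
      then show ?thesis using Fa[OF sc(1)] by simp
    qed
    show False
    proof (cases "y = a \<or> y = b")
      case True
      then show ?thesis
      proof
        assume "y = a"
        then have "y \<in> set (seg b)" using y \<open>a \<noteq> b\<close> unfolding A_def by auto
        then show False using sa[OF that(2)] aW(2)[OF that(1)] \<open>y = a\<close> by fastforce
      next
        assume "y = b"
        then have "y \<in> set (seg a)" using y \<open>a \<noteq> b\<close> unfolding A_def by auto
        then show False using sa[OF that(1)] aW(2)[OF that(2)] \<open>y = b\<close> by fastforce
      qed
    next
      case False
      then have "y \<in> set (seg a)" "y \<in> set (seg b)" using y unfolding A_def by auto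
      then obtain w w' where w: "w \<in> set (pa a)" "y = (w, F (fst a, h a, l a) w)"
        "w' \<in> set (pa b)" "y = (w', F (fst b, h b, l b) w')" using segset by metis
      then have "w = w'" "F (fst a, h a, l a) w = F (fst b, h b, l b) w" by auto
      then have "(fst a, h a, l a) = (fst b, h b, l b)"
        using Finj aW that hW lL w unfolding pa_def by metis
      then show False using linj that by auto
    qed
  qed
  define R where "R a b = A a @ rev (A b)" for a b
  have Rp: "R a b \<in> paths (blowup_V V t) (blowup_E E) a b"
    if "a \<in> \<Union>M" "b \<in> \<Union>M" "a \<noteq> b" "h a = h b" for a b
  proof -
    have d: "set (A a) \<inter> set (A b) = {}" using F6 that by auto
    have ne: "A a \<noteq> []" "A b \<noteq> []" unfolding A_def by auto
    have "last (A a) \<in> set (A a)" "last (A b) \<in> set (A b)" using ne by auto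
    then have "last (A a) \<noteq> last (A b)" using d by auto
    moreover have "fst (last (A a)) = fst (last (A b))" using F4 that by simp
    ultimately have "snd (last (A a)) \<noteq> snd (last (A b))" by (metis prod.expand)
    then have j: "blowup_E E (last (A a)) (hd (rev (A b)))"
      using \<open>fst (last (A a)) = fst (last (A b))\<close> ne unfolding blowup_E_def by (simp add: hd_rev)
    have sym: "successively (\<lambda>x y. blowup_E E y x) (A b)"
    proof (rule successively_mono[OF F3[OF that(2)]])
      fix x y assume "blowup_E E x y" then show "blowup_E E y x"
        using sg unfolding blowup_E_def simple_graph_def by auto
    qed
    have "successively (blowup_E E) (R a b)"
      unfolding R_def successively_append_iff using F3[OF that(1)] sym j by simp
    moreover have "distinct (R a b)" unfolding R_def using F2 that d by simp
    moreover have "set (R a b) \<subseteq> blowup_V V t" unfolding R_def blowup_V_def using F1 that by auto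
    moreover have "hd (R a b) = a" "last (R a b) = b" "R a b \<noteq> []" unfolding R_def A_def by auto
    ultimately show ?thesis unfolding paths_def by blast
  qed
  define ep where "ep e = (SOME p. e = {fst p, snd p} \<and> fst p \<noteq> snd p)" for e :: "('v\<times>nat) set"
  have epp: "e = {fst (ep e), snd (ep e)} \<and> fst (ep e) \<noteq> snd (ep e)" if "e \<in> M" for e
  proof -
    have "card e = 2" using mat that unfolding is_matching_on_def by auto
    then obtain a b where "e = {a,b}" "a \<noteq> b" unfolding card_2_iff by blast
    then have "\<exists>p. e = {fst p, snd p} \<and> fst p \<noteq> snd p" by (intro exI[of _ "(a,b)"]) auto
    then show ?thesis unfolding ep_def by (rule someI_ex)
  qed
  define P where "P e = R (fst (ep e)) (snd (ep e))" for e
  have "\<forall>e\<in>M. \<exists>u v. e = {u,v} \<and> P e \<in> paths (blowup_V V t) (blowup_E E) u v"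
  proof
    fix e assume e: "e \<in> M"
    have in1: "fst (ep e) \<in> \<Union>M" "snd (ep e) \<in> \<Union>M" using epp[OF e] e by auto
    have "h (fst (ep e)) = h (snd (ep e))" using hcons e epp[OF e] by blast
    then show "\<exists>u v. e = {u,v} \<and> P e \<in> paths (blowup_V V t) (blowup_E E) u v"
      using Rp[OF in1] epp[OF e] unfolding P_def by blast
  qed
  moreover have "\<forall>e\<in>M. \<forall>e'\<in>M. e \<noteq> e' \<longrightarrow> set (P e) \<inter> set (P e') = {}"
  proof (intro ballI impI)
    fix e e' assume e: "e \<in> M" "e' \<in> M" "e \<noteq> e'"
    have dj: "e \<inter> e' = {}" using mat e unfolding is_matching_on_def by blast
    have sP: "set (P f) = set (A (fst (ep f))) \<union> set (A (snd (ep f)))" for f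
      unfolding P_def R_def by auto
    have m: "fst (ep e) \<in> e" "snd (ep e) \<in> e" "fst (ep e') \<in> e'" "snd (ep e') \<in> e'"
      using epp e by auto
    have U: "fst (ep e) \<in> \<Union>M" "snd (ep e) \<in> \<Union>M" "fst (ep e') \<in> \<Union>M" "snd (ep e') \<in> \<Union>M"
      using m e by auto
    have ne: "x \<noteq> y" if "x \<in> e" "y \<in> e'" for x y using dj that by auto
    show "set (P e) \<inter> set (P e') = {}"
      unfolding sP using F6[OF U(1) U(3) ne[OF m(1) m(3)]] F6[OF U(1) U(4) ne[OF m(1) m(4)]]
        F6[OF U(2) U(3) ne[OF m(2) m(3)]] F6[OF U(2) U(4) ne[OF m(2) m(4)]] by blast
  qed
  ultimately show ?thesis by blast
qed



lemma nat_ceiling_upper: "0 \<le> (y::real) \<Longrightarrow> real (nat \<lceil>y\<rceil>) \<le> y + 1"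
proof -
  assume "0 \<le> y"
  then have "0 \<le> \<lceil>y\<rceil>" by simp
  then have "real (nat \<lceil>y\<rceil>) = of_int \<lceil>y\<rceil>" by simp
  also have "\<dots> \<le> y + 1" using ceiling_correct[of y] by linarith
  finally show ?thesis .
qed

lemma finite_paths: "finite V \<Longrightarrow> finite (paths V E u v)"
proof -
  assume fV: "finite V"
  have "paths V E u v \<subseteq> {xs. set xs \<subseteq> V \<and> length xs \<le> card V}"
  proof
    fix p assume "p \<in> paths V E u v"
    then have "set p \<subseteq> V" "distinct p" unfolding paths_def by auto
    then have "length p \<le> card V" using card_mono[OF fV] distinct_card by metis
    then show "p \<in> {xs. set xs \<subseteq> V \<and> length xs \<le> card V}" using \<open>set p \<subseteq> V\<close> by simp
  qed
  then show ?thesis using finite_lists_length_le[OF fV] finite_subset by blast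
qed



lemma construct:
  fixes V W :: "'v set" and E and x :: "'v list \<Rightarrow> real" and e :: real
  assumes sg: "simple_graph V E" and WV: "W \<subseteq> V" and Wne: "W \<noteq> {}"
    and feas: "cf_feasible V E W 1 x e" and epos: "e > 0"
    and Ldef: "L = 2*s div card W + 2"
    and tcond: "real s + real L / e + (\<Sum>uz\<in>W\<times>W. real (card (paths V E (fst uz) (snd uz)))) \<le> real t"
    and XW: "X \<subseteq> W \<times> {..<s}"
  shows "matching_linked (blowup_V V t) (blowup_E E) X"
proof -
  have fV: "finite V" using sg simple_graph_def by auto
  have fW: "finite W" using fV WV finite_subset by auto
  have kpos: "card W > 0" using fW Wne by (simp add: card_gt_0_iff)
  have xnn: "\<forall>p. x p \<ge> 0" and dem: "\<forall>u\<in>W. \<forall>v\<in>W. (\<Sum>p\<in>paths V E u v. x p) \<ge> e"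
    and load: "\<forall>w\<in>V. (\<Sum>(u,v)\<in>W\<times>W. \<Sum>p\<in>{p \<in> paths V E u v. w \<in> set p}. x p) \<le> 1"
    using feas unfolding cf_feasible_def by auto
  have fP: "finite (paths V E u v)" for u v by (rule finite_paths[OF fV])
  define n where "n p = nat \<lceil>real L * x p / e\<rceil>" for p
  have ex: "\<forall>uz\<in>W\<times>W. \<exists>f. (\<forall>j<L. f j \<in> paths V E (fst uz) (snd uz)) \<and> (\<forall>p. card {j. j<L \<and> f j = p} \<le> n p)"
  proof
    fix uz assume uz: "uz \<in> W\<times>W"
    let ?P = "paths V E (fst uz) (snd uz)"
    have "real L = real L / e * e" using epos by simp
    also have "\<dots> \<le> real L / e * (\<Sum>p\<in>?P. x p)" using dem uz epos by (intro mult_left_mono) auto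
    also have "\<dots> = (\<Sum>p\<in>?P. real L * x p / e)" by (simp add: sum_distrib_left)
    also have "\<dots> \<le> (\<Sum>p\<in>?P. real (n p))" unfolding n_def by (intro sum_mono real_nat_ceiling_ge)
    also have "\<dots> = real (\<Sum>p\<in>?P. n p)" by simp
    finally have "L \<le> (\<Sum>p\<in>?P. n p)" by linarith
    from alloc[OF fP this] show "\<exists>f. (\<forall>j<L. f j \<in> ?P) \<and> (\<forall>p. card {j. j<L \<and> f j = p} \<le> n p)" by blast
  qed
  then obtain g where g: "\<forall>uz\<in>W\<times>W. (\<forall>j<L. g uz j \<in> paths V E (fst uz) (snd uz)) \<and> (\<forall>p. card {j. j<L \<and> g uz j = p} \<le> n p)"
    by (metis bchoice)
  define \<pi> where "\<pi> u z = g (u,z)" for u z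
  have pip: "\<forall>u\<in>W. \<forall>z\<in>W. \<forall>j<L. \<pi> u z j \<in> paths V E u z" using g unfolding \<pi>_def by auto
  have picnt: "card {j. j<L \<and> \<pi> u z j = p} \<le> n p" if "u\<in>W" "z\<in>W" for u z p using g that unfolding \<pi>_def by auto
  have piV: "set (\<pi> u z j) \<subseteq> V" if "u\<in>W" "z\<in>W" "j<L" for u z j
    using pip that unfolding paths_def by blast
  define Sl where "Sl w = (SIGMA uz:W\<times>W. {j. j<L \<and> w \<in> set (\<pi> (fst uz) (snd uz) j)})" for w
  have fSl: "finite (Sl w)" for w unfolding Sl_def using fW by (intro finite_SigmaI) auto
  have Nnn: "0 \<le> (\<Sum>uz\<in>W\<times>W. real (card (paths V E (fst uz) (snd uz))))" by (intro sum_nonneg) auto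
  have LEnn: "0 \<le> real L / e" using epos by simp
  have st: "s \<le> t" using tcond Nnn LEnn by linarith
  have cardSl: "card (Sl w) \<le> t - s" if wV: "w \<in> V" for w
  proof -
    have c1: "card {j. j<L \<and> w \<in> set (\<pi> u z j)} \<le> (\<Sum>p\<in>{p\<in>paths V E u z. w \<in> set p}. n p)" if uz: "u\<in>W" "z\<in>W" for u z
    proof -
      have "{j. j<L \<and> w \<in> set (\<pi> u z j)} \<subseteq> (\<Union>p\<in>{p\<in>paths V E u z. w \<in> set p}. {j. j<L \<and> \<pi> u z j = p})"
        using pip uz by auto
      then have "card {j. j<L \<and> w \<in> set (\<pi> u z j)} \<le> card (\<Union>p\<in>{p\<in>paths V E u z. w \<in> set p}. {j. j<L \<and> \<pi> u z j = p})"
        by (rule card_mono[rotated]) (use fP in auto)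
      also have "\<dots> \<le> (\<Sum>p\<in>{p\<in>paths V E u z. w \<in> set p}. card {j. j<L \<and> \<pi> u z j = p})"
        by (rule card_UN_le) (use fP in auto)
      also have "\<dots> \<le> (\<Sum>p\<in>{p\<in>paths V E u z. w \<in> set p}. n p)" by (intro sum_mono picnt uz)
      finally show ?thesis .
    qed
    have load': "(\<Sum>uz\<in>W\<times>W. \<Sum>p\<in>{p\<in>paths V E (fst uz) (snd uz). w\<in>set p}. x p) \<le> 1"
      using load wV by (simp add: case_prod_unfold)
    have "real (card (Sl w)) = (\<Sum>uz\<in>W\<times>W. real (card {j. j<L \<and> w \<in> set (\<pi> (fst uz) (snd uz) j)}))"
      unfolding Sl_def using fW by (subst card_SigmaI) auto
    also have "\<dots> \<le> (\<Sum>uz\<in>W\<times>W. real (\<Sum>p\<in>{p\<in>paths V E (fst uz) (snd uz). w \<in> set p}. n p))"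
      using c1 by (intro sum_mono) (simp only: of_nat_le_iff, auto)
    also have "\<dots> = (\<Sum>uz\<in>W\<times>W. \<Sum>p\<in>{p\<in>paths V E (fst uz) (snd uz). w \<in> set p}. real (n p))"
      by simp
    also have "\<dots> \<le> (\<Sum>uz\<in>W\<times>W. \<Sum>p\<in>{p\<in>paths V E (fst uz) (snd uz). w \<in> set p}. real L / e * x p + 1)"
      unfolding n_def
    proof (intro sum_mono)
      fix uz p
      have "0 \<le> real L * x p / e" using xnn epos by simp
      then show "real (nat \<lceil>real L * x p / e\<rceil>) \<le> real L / e * x p + 1"
        using nat_ceiling_upper by (simp add: mult.commute)
    qed
    also have "\<dots> = real L / e * (\<Sum>uz\<in>W\<times>W. \<Sum>p\<in>{p\<in>paths V E (fst uz) (snd uz). w\<in>set p}. x p)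
         + (\<Sum>uz\<in>W\<times>W. real (card {p\<in>paths V E (fst uz) (snd uz). w \<in> set p}))"
      by (simp add: sum.distrib sum_distrib_left)
    also have "\<dots> \<le> real L / e * 1 + (\<Sum>uz\<in>W\<times>W. real (card (paths V E (fst uz) (snd uz))))"
    proof (intro add_mono mult_left_mono load' LEnn sum_mono)
      fix uz show "real (card {p\<in>paths V E (fst uz) (snd uz). w \<in> set p}) \<le> real (card (paths V E (fst uz) (snd uz)))"
        using fP by (simp add: card_mono)
    qed
    also have "\<dots> \<le> real t - real s" using tcond by simp
    finally show ?thesis using st by linarith
  qed
  define G where "G w = (SOME f. bij_betw f (Sl w) {0..<card (Sl w)})" for w
  have Gb: "bij_betw (G w) (Sl w) {0..<card (Sl w)}" for w
    unfolding G_def using ex_bij_betw_finite_nat[OF fSl] by (rule someI_ex)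
  define F where "F \<sigma> w = s + G w ((fst \<sigma>, fst (snd \<sigma>)), snd (snd \<sigma>))" for \<sigma> :: "'v \<times> 'v \<times> nat" and w
  have inSl: "((u,z),j) \<in> Sl w" if "u\<in>W" "z\<in>W" "j<L" "w \<in> set (\<pi> u z j)" for u z j w
    unfolding Sl_def using that by auto
  have Fr: "\<forall>u\<in>W. \<forall>z\<in>W. \<forall>j<L. \<forall>w\<in>set(\<pi> u z j). s \<le> F (u,z,j) w \<and> F (u,z,j) w < t"
  proof (intro ballI allI impI conjI)
    fix u z j w assume a: "u\<in>W" "z\<in>W" "j<L" "w \<in> set (\<pi> u z j)"
    show "s \<le> F (u,z,j) w" unfolding F_def by simp
    have "G w ((u,z),j) < card (Sl w)" using Gb[of w] inSl[OF a] bij_betwE by fastforce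
    moreover have "card (Sl w) \<le> t - s" using cardSl piV[OF a(1-3)] a(4) by blast
    ultimately show "F (u,z,j) w < t" unfolding F_def using st by simp
  qed
  have Finj: "\<forall>u\<in>W. \<forall>z\<in>W. \<forall>j<L. \<forall>u'\<in>W. \<forall>z'\<in>W. \<forall>j'<L. \<forall>w.
         w\<in>set(\<pi> u z j) \<and> w \<in> set(\<pi> u' z' j') \<and> F (u,z,j) w = F (u',z',j') w \<longrightarrow> (u,z,j) = (u',z',j')"
  proof (intro ballI allI impI)
    fix u z j u' z' j' w
    assume a: "u\<in>W" "z\<in>W" "j<L" "u'\<in>W" "z'\<in>W" "j'<L"
      "w\<in>set(\<pi> u z j) \<and> w \<in> set(\<pi> u' z' j') \<and> F (u,z,j) w = F (u',z',j') w"
    have "G w ((u,z),j) = G w ((u',z'),j')" using a(7) unfolding F_def by simp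
    then have "((u,z),j) = ((u',z'),j')"
      using bij_betw_imp_inj_on[OF Gb[of w]] inSl a by (meson inj_onD)
    then show "(u,z,j) = (u',z',j')" by simp
  qed
  have XV: "X \<subseteq> blowup_V V t" unfolding blowup_V_def using XW WV st by auto
  have fX: "finite X" using XW fW finite_subset by (metis finite_SigmaI finite_lessThan)
  show ?thesis unfolding matching_linked_def
  proof (intro conjI allI impI XV)
    fix M assume mat: "is_matching_on X M"
    have c2: "\<forall>e\<in>M. card e = 2" and dj: "\<forall>e\<in>M. \<forall>e'\<in>M. e \<noteq> e' \<longrightarrow> e \<inter> e' = {}"
      and MX: "\<forall>e\<in>M. e \<subseteq> X" using mat unfolding is_matching_on_def by auto
    have fM: "finite M" using MX fX by (metis Pow_iff finite_Pow_iff finite_subset subsetI)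
    have UX: "\<Union>M \<subseteq> X" using MX by auto
    have cu: "\<forall>u. card {a \<in> \<Union>M. fst a = u} \<le> s"
    proof
      fix u
      have "{a \<in> \<Union>M. fst a = u} \<subseteq> {u} \<times> {..<s}" using UX XW by auto
      then have "card {a \<in> \<Union>M. fst a = u} \<le> card ({u} \<times> {..<s})" by (rule card_mono[rotated]) auto
      then show "card {a \<in> \<Union>M. fst a = u} \<le> s" by (simp add: card_cartesian_product)
    qed
    have kL: "2*s + card W \<le> card W * L"
    proof -
      have "card W * (2*s div card W) + 2*s mod card W = 2*s" by (rule mult_div_mod_eq)
      moreover have "2*s mod card W < card W" using kpos by simp
      ultimately show ?thesis unfolding Ldef distrib_left by linarith
    qed
    obtain h where h: "\<forall>e\<in>M. \<forall>a\<in>e. \<forall>b\<in>e. h a = h b" "\<forall>a\<in>\<Union>M. h a \<in> W"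
        "\<forall>u z. card {a\<in>\<Union>M. fst a = u \<and> h a = z} \<le> L"
      using hub_exists[OF fM c2 dj fW cu kL] by blast
    define S where "S u z = {b\<in>\<Union>M. fst b = u \<and> h b = z}" for u z
    have fU: "finite (\<Union>M)" using UX fX finite_subset by blast
    have fS: "finite (S u z)" for u z unfolding S_def by (rule rev_finite_subset[OF fU]) auto
    define lg where "lg u z = (SOME f. bij_betw f (S u z) {0..<card (S u z)})" for u z
    have lgb: "bij_betw (lg u z) (S u z) {0..<card (S u z)}" for u z
      unfolding lg_def using ex_bij_betw_finite_nat[OF fS] by (rule someI_ex)
    define l where "l a = lg (fst a) (h a) a" for a
    have aS: "a \<in> S (fst a) (h a)" if "a \<in> \<Union>M" for a unfolding S_def using that by simp
    have lL: "\<forall>a\<in>\<Union>M. l a < L"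
    proof
      fix a assume a: "a \<in> \<Union>M"
      have "l a < card (S (fst a) (h a))" unfolding l_def using lgb aS[OF a] bij_betwE by fastforce
      also have "\<dots> \<le> L" using h(3) unfolding S_def by blast
      finally show "l a < L" .
    qed
    have linj: "\<forall>a\<in>\<Union>M. \<forall>b\<in>\<Union>M. fst a = fst b \<and> h a = h b \<and> l a = l b \<longrightarrow> a = b"
    proof (intro ballI impI)
      fix a b assume ab: "a \<in> \<Union>M" "b \<in> \<Union>M" "fst a = fst b \<and> h a = h b \<and> l a = l b"
      then have "b \<in> S (fst a) (h a)" using aS[OF ab(2)] by simp
      moreover have "lg (fst a) (h a) a = lg (fst a) (h a) b" using ab(3) unfolding l_def by metis
      ultimately show "a = b" using bij_betw_imp_inj_on[OF lgb] aS[OF ab(1)] by (meson inj_onD)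
    qed
    from route[OF sg WV st XW mat h(1) h(2) lL linj pip Fr Finj]
    show "\<exists>P. (\<forall>e\<in>M. \<exists>u v. e = {u, v} \<and> P e \<in> paths (blowup_V V t) (blowup_E E) u v) \<and>
             (\<forall>e\<in>M. \<forall>e'\<in>M. e \<noteq> e' \<longrightarrow> set (P e) \<inter> set (P e') = {})" .
  qed
qed



lemma ek_le:
  assumes sg: "simple_graph V E" and WV: "W \<subseteq> V" and Wne: "W \<noteq> {}"
    and feas: "cf_feasible V E W 1 x e"
  shows "e * real (card W) \<le> 1"
proof -
  have fV: "finite V" using sg simple_graph_def by auto
  have fW: "finite W" using fV WV finite_subset by auto
  obtain u where u: "u \<in> W" using Wne by auto
  have xnn: "\<forall>p. x p \<ge> 0" and dem: "\<forall>u\<in>W. \<forall>v\<in>W. (\<Sum>p\<in>paths V E u v. x p) \<ge> e"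
    and load: "\<forall>w\<in>V. (\<Sum>(u,v)\<in>W\<times>W. \<Sum>p\<in>{p \<in> paths V E u v. w \<in> set p}. x p) \<le> 1"
    using feas unfolding cf_feasible_def by auto
  define f where "f a b = (\<Sum>p\<in>{p \<in> paths V E a b. u \<in> set p}. x p)" for a b
  have fnn: "0 \<le> f a b" for a b unfolding f_def using xnn by (intro sum_nonneg) auto
  have fu: "f u b = (\<Sum>p\<in>paths V E u b. x p)" for b
  proof -
    have "{p \<in> paths V E u b. u \<in> set p} = paths V E u b"
      unfolding paths_def by (auto intro: hd_in_set)
    then show ?thesis unfolding f_def by simp
  qed
  have "e * real (card W) = (\<Sum>b\<in>W. e)" by simp
  also have "\<dots> \<le> (\<Sum>b\<in>W. f u b)" unfolding fu using dem u by (intro sum_mono) auto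
  also have "\<dots> \<le> (\<Sum>a\<in>W. \<Sum>b\<in>W. f a b)"
    using u fW fnn by (intro member_le_sum[of u W "\<lambda>a. \<Sum>b\<in>W. f a b"]) (auto intro: sum_nonneg)
  also have "\<dots> = (\<Sum>(a,b)\<in>W\<times>W. f a b)" by (rule sum.cartesian_product)
  also have "\<dots> \<le> 1" using load u WV unfolding f_def by auto
  finally show ?thesis .
qed

lemma cap:
  fixes V W :: "'v set" and E and x :: "'v list \<Rightarrow> real" and e :: real
  assumes sg: "simple_graph V E" and WV: "W \<subseteq> V" and Wne: "W \<noteq> {}"
    and feas: "cf_feasible V E W 1 x e" and epos: "e > 0"
  shows "\<exists>T. \<forall>t\<ge>T. \<exists>X. matching_linked (blowup_V V t) (blowup_E E) X
            \<and> card X = nat \<lfloor>e * real (card W) ^ 2 / 108 * real t\<rfloor>"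
proof -
  have fV: "finite V" using sg simple_graph_def by auto
  have fW: "finite W" using fV WV finite_subset by auto
  define k where "k = card W"
  have kpos: "k > 0" unfolding k_def using fW Wne by (simp add: card_gt_0_iff)
  have ek: "e * real k \<le> 1" unfolding k_def by (rule ek_le[OF sg WV Wne feas])
  define c where "c = e * real k ^ 2 / 108"
  define N where "N = (\<Sum>uz\<in>W\<times>W. real (card (paths V E (fst uz) (snd uz))))"
  have Nnn: "0 \<le> N" unfolding N_def by (intro sum_nonneg) auto
  define Q where "Q = 1 + 2 / (real k * e) + 2 / e + N"
  have Qnn: "0 \<le> Q" unfolding Q_def using Nnn epos kpos by simp
  show ?thesis
  proof (rule exI[of _ "nat \<lceil>2 * Q\<rceil>"], intro allI impI)
    fix t :: nat assume tT: "nat \<lceil>2 * Q\<rceil> \<le> t"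
    have tQ0: "2 * Q \<le> real t" using tT by linarith
    then have tQ: "Q \<le> real t / 2" by simp
    define s where "s = nat \<lceil>c * real t / real k\<rceil>"
    define L where "L = 2*s div card W + 2"
    have ctk: "c * real t / real k = e * real k * real t / 108"
      unfolding c_def using kpos by (simp add: power2_eq_square)
    have ctk0: "0 \<le> c * real t / real k" unfolding ctk using epos by simp
    have s1: "real s \<le> e * real k * real t / 108 + 1"
      unfolding s_def using nat_ceiling_upper[OF ctk0] ctk by linarith
    have s2: "e * real k * real t \<le> real t" using ek mult_right_mono[OF ek, of "real t"] by simp
    have sle: "real s \<le> real t / 108 + 1" using s1 s2 by linarith
    have L1: "real L \<le> 2 * real s / real k + 2"
      unfolding L_def k_def using of_nat_div_le_of_nat[of "2*s" "card W"] by simp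
    have "real L / e \<le> (2 * real s / real k + 2) / e" using L1 epos by (simp add: divide_right_mono)
    also have "\<dots> = 2 * real s / (real k * e) + 2 / e" using epos kpos by (simp add: field_simps)
    also have "\<dots> \<le> 2 * (e * real k * real t / 108 + 1) / (real k * e) + 2 / e"
      using s1 epos kpos by (intro add_right_mono divide_right_mono) auto
    also have "\<dots> = 2 * real t / 108 + 2 / (real k * e) + 2 / e"
      using epos kpos by (simp add: field_simps)
    finally have Lle: "real L / e \<le> 2 * real t / 108 + 2 / (real k * e) + 2 / e" .
    have tcond: "real s + real L / e + N \<le> real t"
      using sle Lle tQ of_nat_0_le_iff[of t] unfolding Q_def by linarith
    have MLk: "\<forall>X. X \<subseteq> W \<times> {..<s} \<longrightarrow> matching_linked (blowup_V V t) (blowup_E E) X"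
      using construct[OF sg WV Wne feas epos L_def tcond[unfolded N_def]] by blast
    have cy: "0 \<le> c * real t" unfolding c_def using epos by simp
    then have "real (nat \<lfloor>c * real t\<rfloor>) = of_int \<lfloor>c * real t\<rfloor>" by simp
    then have "real (nat \<lfloor>c * real t\<rfloor>) \<le> c * real t" using of_int_floor_le[of "c * real t"] by linarith
    also have "\<dots> = real k * (c * real t / real k)" using kpos by simp
    also have "\<dots> \<le> real k * real s" unfolding s_def using kpos by (intro mult_left_mono real_nat_ceiling_ge) auto
    also have "\<dots> = real (card (W \<times> {..<s}))" by (simp add: card_cartesian_product k_def)
    finally have "nat \<lfloor>c * real t\<rfloor> \<le> card (W \<times> {..<s})" by linarith
    then obtain X where X: "X \<subseteq> W \<times> {..<s}" "card X = nat \<lfloor>c * real t\<rfloor>"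
      by (metis obtain_subset_with_card_n)
    show "\<exists>X. matching_linked (blowup_V V t) (blowup_E E) X
            \<and> card X = nat \<lfloor>e * real (card W) ^ 2 / 108 * real t\<rfloor>"
      using MLk X unfolding c_def k_def by blast
  qed
qed



lemma paths_single: "w \<in> V \<Longrightarrow> paths V E w w = {[w]}"
proof -
  assume wV: "w \<in> V"
  have "p = [w]" if "p \<in> paths V E w w" for p
  proof -
    have p: "p \<noteq> []" "hd p = w" "last p = w" "distinct p" using that unfolding paths_def by auto
    have "p = w # tl p" using p by (metis hd_Cons_tl)
    show ?thesis
    proof (cases "tl p = []")
      case True then show ?thesis using \<open>p = w # tl p\<close> by simp
    next
      case False
      then have "last p = last (tl p)" using \<open>p = w # tl p\<close> by (metis last_ConsR)
      then have "w \<in> set (tl p)" using p(3) False by (metis last_in_set)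
      then show ?thesis using p(4) \<open>p = w # tl p\<close> by (metis distinct.simps(2))
    qed
  qed
  moreover have "[w] \<in> paths V E w w" unfolding paths_def using wV by simp
  ultimately show ?thesis by blast
qed

lemma feas_single:
  assumes ps: "paths V E w w = {[w]}"
  shows "cf_feasible V E {w} 1 (\<lambda>p. if p = [w] then 1 else 0) 1"
proof -
  define x1 :: "'a list \<Rightarrow> real" where "x1 = (\<lambda>p. if p = [w] then 1 else 0)"
  have s1: "(\<Sum>p\<in>paths V E w w. x1 p) = 1" unfolding ps x1_def by simp
  have d: "\<forall>u\<in>{w}. \<forall>v\<in>{w}. (\<Sum>p\<in>paths V E u v. x1 p) \<ge> 1"
  proof (intro ballI)
    fix u v assume "u \<in> {w}" "v \<in> {w}"
    then have "u = w" "v = w" by auto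
    then show "(\<Sum>p\<in>paths V E u v. x1 p) \<ge> 1" using s1 by simp
  qed
  have l: "\<forall>w'\<in>V. (\<Sum>(u,v)\<in>{w}\<times>{w}. \<Sum>p\<in>{p \<in> paths V E u v. w' \<in> set p}. x1 p) \<le> 1"
  proof
    fix w'
    have e: "{w}\<times>{w} = {(w,w)}" by simp
    have "(\<Sum>(u,v)\<in>{w}\<times>{w}. \<Sum>p\<in>{p \<in> paths V E u v. w' \<in> set p}. x1 p)
       = (\<Sum>p\<in>{p \<in> paths V E w w. w' \<in> set p}. x1 p)" unfolding e by simp
    also have "\<dots> \<le> 1"
    proof (cases "w' = w")
      case True
      then have "{p \<in> paths V E w w. w' \<in> set p} = {[w]}" unfolding ps by auto
      then show ?thesis unfolding x1_def by simp
    next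
      case False
      then have "{p \<in> paths V E w w. w' \<in> set p} = {}" unfolding ps by auto
      then show ?thesis by (simp only: sum.empty)
    qed
    finally show "(\<Sum>(u,v)\<in>{w}\<times>{w}. \<Sum>p\<in>{p \<in> paths V E u v. w' \<in> set p}. x1 p) \<le> 1" .
  qed
  have n: "\<forall>p. x1 p \<ge> 0" unfolding x1_def by simp
  have "cf_feasible V E {w} 1 x1 1" unfolding cf_feasible_def using d l n by blast
  then show ?thesis unfolding x1_def .
qed

theorem mainTheorem17:
  fixes V W :: "'v set" and E :: "'v \<Rightarrow> 'v \<Rightarrow> bool"
  assumes "simple_graph V E" and "W \<subseteq> V" and "W \<noteq> {}"
  shows "linkage_capacity V E \<ge> eps_cf V E W * real (card W) ^ 2 / 108"
proof -
  note sg = assms(1) and WV = assms(2) and Wne = assms(3)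
  have fV: "finite V" using sg simple_graph_def by auto
  have fW: "finite W" using fV WV finite_subset by auto
  define S where "S = {c. c > 0 \<and> (\<exists>T. \<forall>t\<ge>T. \<exists>X.
       matching_linked (blowup_V V t) (blowup_E E) X \<and> card X = nat \<lfloor>c * real t\<rfloor>)}"
  have gam: "linkage_capacity V E = Sup S" unfolding linkage_capacity_def S_def ..
  have bdd: "bdd_above S"
  proof (rule bdd_aboveI[of _ "real (card V) + 1"])
    fix c assume "c \<in> S"
    then obtain T where c0: "c > 0" and T: "\<forall>t\<ge>T. \<exists>X. matching_linked (blowup_V V t) (blowup_E E) X
        \<and> card X = nat \<lfloor>c * real t\<rfloor>" unfolding S_def by blast
    define t where "t = max T 1"
    obtain X where X: "matching_linked (blowup_V V t) (blowup_E E) X" "card X = nat \<lfloor>c * real t\<rfloor>"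
      using T[rule_format, of t] unfolding t_def by auto
    have "X \<subseteq> V \<times> {..<t}" using X(1) unfolding matching_linked_def blowup_V_def by auto
    then have "card X \<le> card (V \<times> {..<t})" using fV by (intro card_mono) auto
    then have cX: "card X \<le> card V * t" by (simp add: card_cartesian_product)
    have t1: "1 \<le> real t" unfolding t_def by simp
    have "0 \<le> c * real t" using c0 by simp
    then have "real (nat \<lfloor>c * real t\<rfloor>) = of_int \<lfloor>c * real t\<rfloor>" by simp
    then have "c * real t < real (card X) + 1" using X(2) floor_correct[of "c * real t"] by linarith
    also have "\<dots> \<le> real (card V) * real t + 1" using cX
      by (metis add_le_cancel_right of_nat_le_iff of_nat_mult)
    also have "\<dots> \<le> (real (card V) + 1) * real t" using t1 by (simp add: algebra_simps)
    finally have "c * real t < (real (card V) + 1) * real t" .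
    then have "c < real (card V) + 1" by (rule mult_right_less_imp_less) (use t1 in simp)
    then show "c \<le> real (card V) + 1" by simp
  qed
  obtain w where w: "w \<in> W" using Wne by auto
  have wV: "w \<in> V" using w WV by auto
  define x1 where "x1 p = (if p = [w] then 1 else (0::real))" for p
  have feas1: "cf_feasible V E {w} 1 x1 1" unfolding x1_def by (rule feas_single[OF paths_single[OF wV]])
  have "\<exists>T. \<forall>t\<ge>T. \<exists>X. matching_linked (blowup_V V t) (blowup_E E) X
            \<and> card X = nat \<lfloor>1 * real (card {w}) ^ 2 / 108 * real t\<rfloor>"
    by (rule cap[OF sg _ _ feas1]) (use wV in auto)
  then have S1: "1/108 \<in> S" unfolding S_def by simp
  have gpos: "1/108 \<le> Sup S" using cSup_upper[OF S1 bdd] .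
  define Fs where "Fs = {e. \<exists>x. cf_feasible V E W 1 x e}"
  have eps: "eps_cf V E W = Sup Fs" unfolding eps_cf_def Fs_def ..
  have "0 \<in> Fs" unfolding Fs_def cf_feasible_def by (intro CollectI exI[of _ "\<lambda>_. 0"]) auto
  then have Fne: "Fs \<noteq> {}" by auto
  define k where "k = real (card W) ^ 2"
  have kpos: "k > 0" unfolding k_def using fW Wne by (simp add: card_gt_0_iff)
  have "Sup Fs \<le> 108 * Sup S / k"
  proof (rule cSup_least[OF Fne])
    fix e assume "e \<in> Fs"
    then obtain x where feas: "cf_feasible V E W 1 x e" unfolding Fs_def by blast
    show "e \<le> 108 * Sup S / k"
    proof (cases "e > 0")
      case False
      then show ?thesis using gpos kpos by (smt (verit) divide_nonneg_pos)
    next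
      case True
      have "e * k / 108 \<in> S" unfolding S_def k_def
        using cap[OF sg WV Wne feas True] True kpos[unfolded k_def] by simp
      then have "e * k / 108 \<le> Sup S" using cSup_upper bdd by blast
      then show ?thesis using kpos by (simp add: field_simps)
    qed
  qed
  then have "Sup Fs * k / 108 \<le> Sup S" using kpos by (simp add: field_simps)
  then show ?thesis unfolding gam eps k_def by simp
qed


end
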